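(* Let $(D,\prec,\succ,\alpha)$ be a Hom-dendriform algebra and $(V,\prec_l,\succ_l,\prec_r,\succ_r,\beta)$ a representation of it. On $D\oplus V$ define, for $x,y\in D$, $u,v\in V$: $(x,u)\prec_\vdash(y,v)=(x\prec y,\ x\prec_l v)$, $(x,u)\prec_\dashv(y,v)=(x\prec y,\ u\prec_r y)$, $(x,u)\succ_\vdash(y,v)=(x\succ y,\ x\succ_l v)$, $(x,u)\succ_\dashv(y,v)=(x\succ y,\ u\succ_r y)$, and the linear map $\alpha\otimes\beta:D\oplus V\to D\oplus V$, $(x,u)\mapsto(\alpha(x),\beta(u))$. Then $(D\oplus V,\prec_\vdash,\prec_\dashv,\succ_\vdash,\succ_\dashv,\alpha\otimes\beta)$ is a Hom-quadri-dendriform algebra (called the hemi-semidirect product Hom-quadri-dendriform algebra).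
   Context: All vector spaces are over a field of characteristic zero. A Hom-dendriform algebra is $(D,\prec,\succ,\alpha)$ with $\prec,\succ$ bilinear on $D$ and $\alpha:D\to D$ linear such that for all $x,y,z$: $\alpha(x)\prec(y\prec z+y\succ z)=(x\prec y)\prec\alpha(z)$; $\alpha(x)\succ(y\prec z)=(x\succ y)\prec\alpha(z)$; $\alpha(x)\succ(y\succ z)=(x\prec y+x\succ y)\succ\alpha(z)$. A representation of $(D,\prec,\succ,\alpha)$ is a vector space $V$ with a linear map $\beta:V\to V$ and bilinear maps $\prec_l,\succ_l:D\times V\to V$, $\prec_r,\succ_r:V\times D\to V$ such that for all $x,y\in D$, $m\in V$: $(x\prec y)\prec_l\beta(m)=\alpha(x)\prec_l(y\prec_l m+y\succ_l m)$; $(x\succ y)\prec_l\beta(m)=\alpha(x)\succ_l(y\prec_l m)$; $\alpha(x)\succ_l(y\succ_l m)=(x\prec y+x\succ y)\succ_l\beta(m)$; $\beta(m)\prec_r(x\prec y+x\succ y)=(m\prec_r x)\prec_r\alpha(y)$; $\beta(m)\succ_r(x\prec y)=(m\succ_r x)\prec_r\alpha(y)$; $(m\prec_r x+m\succ_r x)\succ_r\alpha(y)=\beta(m)\succ_r(x\succ y)$; $(x\prec_l m)\prec_r\alpha(y)=\alpha(x)\prec_l(m\prec_r y+m\succ_r y)$; $(x\succ_l m)\prec_r\alpha(y)=\alpha(x)\succ_l(m\prec_r y)$; $(x\prec_l m+x\succ_l m)\succ_r\alpha(y)=\alpha(x)\succ_l(m\succ_r y)$. A Hom-quadri-dendriform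 algebra is a tuple $(E,\prec_\vdash,\prec_\dashv,\succ_\vdash,\succ_\dashv,\gamma)$ with four bilinear operations on $E$ and $\gamma:E\to E$ linear such that for all $x,y,z\in E$: (Q1) $(x\prec_\vdash y)\prec_\vdash\gamma(z)=(x\prec_\dashv y)\prec_\vdash\gamma(z)=\gamma(x)\prec_\vdash(y\prec_\vdash z+y\succ_\vdash z)$; (Q2) $(x\succ_\vdash y)\prec_\vdash\gamma(z)=(x\succ_\dashv y)\prec_\vdash\gamma(z)=\gamma(x)\succ_\vdash(y\prec_\vdash z)$; (Q3) $\gamma(x)\succ_\vdash(y\succ_\vdash z)=(x\prec_\vdash y+x\succ_\vdash y)\succ_\vdash\gamma(z)=(x\prec_\dashv y+x\succ_\dashv y)\succ_\vdash\gamma(z)$; (Q4) $\gamma(x)\succ_\vdash(y\succ_\vdash z)=(x\prec_\dashv y+x\succ_\vdash y)\succ_\vdash\gamma(z)=(x\prec_\vdash y+x\succ_\dashv y)\succ_\vdash\gamma(z)$; (Q5) $(x\prec_\vdash y)\prec_\dashv\gamma(z)=\gamma(x)\prec_\vdash(y\prec_\dashv z+y\succ_\dashv z)$; (Q6) $(x\succ_\vdash y)\prec_\dashv\gamma(z)=\gamma(x)\succ_\vdash(y\prec_\dashv z)$; (Q7) $\gamma(x)\succ_\vdash(y\succ_\dashv z)=(x\prec_\vdash y+x\succ_\vdash y)\succ_\dashv\gamma(z)$; (Q8) $(x\prec_\dashv y)\prec_\dashv\gamma(z)=\gamma(x)\prec_\dashv(y\prec_\vdash z+y\succ_\vdash z)=\gamma(x)\prec_\dashv(y\prec_\dashv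 z+y\succ_\dashv z)$; (Q9) $(x\prec_\dashv y)\prec_\dashv\gamma(z)=\gamma(x)\prec_\dashv(y\prec_\vdash z+y\succ_\dashv z)=\gamma(x)\prec_\dashv(y\prec_\dashv z+y\succ_\vdash z)$; (Q10) $(x\succ_\dashv y)\prec_\dashv\gamma(z)=\gamma(x)\succ_\dashv(y\prec_\vdash z)=\gamma(x)\succ_\dashv(y\prec_\dashv z)$; (Q11) $\gamma(x)\succ_\dashv(y\succ_\vdash z)=\gamma(x)\succ_\dashv(y\succ_\dashv z)=(x\prec_\dashv y+x\succ_\dashv y)\succ_\dashv\gamma(z)$. *)

theory Defs
  imports Complex_Main "HOL-Library.Product_Plus"
begin

definition bilinear_map ::
  "('k::field \<Rightarrow> 'a::ab_group_add \<Rightarrow> 'a) \<Rightarrow> ('k \<Rightarrow> 'b::ab_group_add \<Rightarrow> 'b) \<Rightarrow>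
   ('k \<Rightarrow> 'c::ab_group_add \<Rightarrow> 'c) \<Rightarrow> ('a \<Rightarrow> 'b \<Rightarrow> 'c) \<Rightarrow> bool" where
  "bilinear_map s1 s2 s3 f \<longleftrightarrow>
     (\<forall>x. Vector_Spaces.linear s2 s3 (f x)) \<and> (\<forall>y. Vector_Spaces.linear s1 s3 (\<lambda>x. f x y))"

definition hom_dendriform ::
  "('k::field_char_0 \<Rightarrow> 'd::ab_group_add \<Rightarrow> 'd) \<Rightarrow> ('d \<Rightarrow> 'd \<Rightarrow> 'd) \<Rightarrow> ('d \<Rightarrow> 'd \<Rightarrow> 'd)
   \<Rightarrow> ('d \<Rightarrow> 'd) \<Rightarrow> bool" where
  "hom_dendriform s lt gt \<alpha> \<longleftrightarrow>
     vector_space s \<and> bilinear_map s s s lt \<and> bilinear_map s s s gt \<and> Vector_Spaces.linear s s \<alpha> \<and>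
     (\<forall>x y z. lt (\<alpha> x) (lt y z + gt y z) = lt (lt x y) (\<alpha> z)) \<and>
     (\<forall>x y z. gt (\<alpha> x) (lt y z) = lt (gt x y) (\<alpha> z)) \<and>
     (\<forall>x y z. gt (\<alpha> x) (gt y z) = gt (lt x y + gt x y) (\<alpha> z))"

definition hom_dendriform_rep ::
  "('k::field_char_0 \<Rightarrow> 'd::ab_group_add \<Rightarrow> 'd) \<Rightarrow> ('d \<Rightarrow> 'd \<Rightarrow> 'd) \<Rightarrow> ('d \<Rightarrow> 'd \<Rightarrow> 'd) \<Rightarrow> ('d \<Rightarrow> 'd)
   \<Rightarrow> ('k \<Rightarrow> 'v::ab_group_add \<Rightarrow> 'v) \<Rightarrow> ('d \<Rightarrow> 'v \<Rightarrow> 'v) \<Rightarrow> ('d \<Rightarrow> 'v \<Rightarrow> 'v)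
   \<Rightarrow> ('v \<Rightarrow> 'd \<Rightarrow> 'v) \<Rightarrow> ('v \<Rightarrow> 'd \<Rightarrow> 'v) \<Rightarrow> ('v \<Rightarrow> 'v) \<Rightarrow> bool" where
  "hom_dendriform_rep s lt gt \<alpha> sv ltl gtl ltr gtr \<beta> \<longleftrightarrow>
     vector_space sv \<and> Vector_Spaces.linear sv sv \<beta> \<and>
     bilinear_map s sv sv ltl \<and> bilinear_map s sv sv gtl \<and>
     bilinear_map sv s sv ltr \<and> bilinear_map sv s sv gtr \<and>
     (\<forall>x y m. ltl (lt x y) (\<beta> m) = ltl (\<alpha> x) (ltl y m + gtl y m)) \<and>
     (\<forall>x y m. ltl (gt x y) (\<beta> m) = gtl (\<alpha> x) (ltl y m)) \<and>
     (\<forall>x y m. gtl (\<alpha> x) (gtl y m) = gtl (lt x y + gt x y) (\<beta> m)) \<and>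
     (\<forall>x y m. ltr (\<beta> m) (lt x y + gt x y) = ltr (ltr m x) (\<alpha> y)) \<and>
     (\<forall>x y m. gtr (\<beta> m) (lt x y) = ltr (gtr m x) (\<alpha> y)) \<and>
     (\<forall>x y m. gtr (ltr m x + gtr m x) (\<alpha> y) = gtr (\<beta> m) (gt x y)) \<and>
     (\<forall>x y m. ltr (ltl x m) (\<alpha> y) = ltl (\<alpha> x) (ltr m y + gtr m y)) \<and>
     (\<forall>x y m. ltr (gtl x m) (\<alpha> y) = gtl (\<alpha> x) (ltr m y)) \<and>
     (\<forall>x y m. gtr (ltl x m + gtl x m) (\<alpha> y) = gtl (\<alpha> x) (gtr m y))"

text \<open>Hom-quadri-dendriform algebra (E, lv = prec_vdash, ld = prec_dashv,
  gv = succ_vdash, gd = succ_dashv, gamma).\<close>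
definition hom_quadri_dendriform ::
  "('k::field_char_0 \<Rightarrow> 'e::ab_group_add \<Rightarrow> 'e) \<Rightarrow> ('e \<Rightarrow> 'e \<Rightarrow> 'e) \<Rightarrow> ('e \<Rightarrow> 'e \<Rightarrow> 'e)
   \<Rightarrow> ('e \<Rightarrow> 'e \<Rightarrow> 'e) \<Rightarrow> ('e \<Rightarrow> 'e \<Rightarrow> 'e) \<Rightarrow> ('e \<Rightarrow> 'e) \<Rightarrow> bool" where
  "hom_quadri_dendriform s lv ld gv gd \<gamma> \<longleftrightarrow>
     vector_space s \<and> bilinear_map s s s lv \<and> bilinear_map s s s ld \<and>
     bilinear_map s s s gv \<and> bilinear_map s s s gd \<and> Vector_Spaces.linear s s \<gamma> \<and>
     (\<forall>x y z. lv (lv x y) (\<gamma> z) = lv (ld x y) (\<gamma> z) \<and>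
              lv (ld x y) (\<gamma> z) = lv (\<gamma> x) (lv y z + gv y z)) \<and>
     (\<forall>x y z. lv (gv x y) (\<gamma> z) = lv (gd x y) (\<gamma> z) \<and>
              lv (gd x y) (\<gamma> z) = gv (\<gamma> x) (lv y z)) \<and>
     (\<forall>x y z. gv (\<gamma> x) (gv y z) = gv (lv x y + gv x y) (\<gamma> z) \<and>
              gv (lv x y + gv x y) (\<gamma> z) = gv (ld x y + gd x y) (\<gamma> z)) \<and>
     (\<forall>x y z. gv (\<gamma> x) (gv y z) = gv (ld x y + gv x y) (\<gamma> z) \<and>
              gv (ld x y + gv x y) (\<gamma> z) = gv (lv x y + gd x y) (\<gamma> z)) \<and>
     (\<forall>x y z. ld (lv x y) (\<gamma> z) = lv (\<gamma> x) (ld y z + gd y z)) \<and>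
     (\<forall>x y z. ld (gv x y) (\<gamma> z) = gv (\<gamma> x) (ld y z)) \<and>
     (\<forall>x y z. gv (\<gamma> x) (gd y z) = gd (lv x y + gv x y) (\<gamma> z)) \<and>
     (\<forall>x y z. ld (ld x y) (\<gamma> z) = ld (\<gamma> x) (lv y z + gv y z) \<and>
              ld (\<gamma> x) (lv y z + gv y z) = ld (\<gamma> x) (ld y z + gd y z)) \<and>
     (\<forall>x y z. ld (ld x y) (\<gamma> z) = ld (\<gamma> x) (lv y z + gd y z) \<and>
              ld (\<gamma> x) (lv y z + gd y z) = ld (\<gamma> x) (ld y z + gv y z)) \<and>
     (\<forall>x y z. ld (gd x y) (\<gamma> z) = gd (\<gamma> x) (lv y z) \<and>
              gd (\<gamma> x) (lv y z) = gd (\<gamma> x) (ld y z)) \<and>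
     (\<forall>x y z. gd (\<gamma> x) (gv y z) = gd (\<gamma> x) (gd y z) \<and>
              gd (\<gamma> x) (gd y z) = gd (ld x y + gd x y) (\<gamma> z))"

text \<open>The direct sum D \<oplus> V is the product type with componentwise operations.\<close>
definition sum_scale :: "('k \<Rightarrow> 'd \<Rightarrow> 'd) \<Rightarrow> ('k \<Rightarrow> 'v \<Rightarrow> 'v) \<Rightarrow> 'k \<Rightarrow> 'd \<times> 'v \<Rightarrow> 'd \<times> 'v" where
  "sum_scale s sv c p = (s c (fst p), sv c (snd p))"

end

theory Submission
  imports Defs
begin

lemma lin_iff: "Vector_Spaces.linear s1 s2 f \<longleftrightarrow> vector_space s1 \<and> vector_space s2 \<and>
   (\<forall>x y. f (x + y) = f x + f y) \<and> (\<forall>c x. f (s1 c x) = s2 c (f x))"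
  unfolding Vector_Spaces.linear_def module_hom_def module_hom_axioms_def module_iff_vector_space by auto

lemma vs_iff: "vector_space s \<longleftrightarrow> (\<forall>a x y. s a (x + y) = s a x + s a y) \<and>
   (\<forall>a b x. s (a + b) x = s a x + s b x) \<and> (\<forall>a b x. s a (s b x) = s (a * b) x) \<and> (\<forall>x. s 1 x = x)"
  unfolding vector_space_def by auto

lemma bil_iff: "bilinear_map s1 s2 s3 f \<longleftrightarrow> vector_space s1 \<and> vector_space s2 \<and> vector_space s3 \<and>
   (\<forall>x y z. f x (y + z) = f x y + f x z) \<and> (\<forall>x c y. f x (s2 c y) = s3 c (f x y)) \<and>
   (\<forall>x y z. f (x + y) z = f x z + f y z) \<and> (\<forall>x c y. f (s1 c x) y = s3 c (f x y))"
  unfolding bilinear_map_def lin_iff by blast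

theorem proposition3p7:
  fixes s :: "'k::field_char_0 \<Rightarrow> 'd::ab_group_add \<Rightarrow> 'd"
    and lt gt :: "'d \<Rightarrow> 'd \<Rightarrow> 'd" and \<alpha> :: "'d \<Rightarrow> 'd"
    and sv :: "'k \<Rightarrow> 'v::ab_group_add \<Rightarrow> 'v"
    and ltl gtl :: "'d \<Rightarrow> 'v \<Rightarrow> 'v" and ltr gtr :: "'v \<Rightarrow> 'd \<Rightarrow> 'v" and \<beta> :: "'v \<Rightarrow> 'v"
  assumes "hom_dendriform s lt gt \<alpha>"
    and "hom_dendriform_rep s lt gt \<alpha> sv ltl gtl ltr gtr \<beta>"
  shows "hom_quadri_dendriform (sum_scale s sv)
           (\<lambda>(x, u) (y, v). (lt x y, ltl x v))
           (\<lambda>(x, u) (y, v). (lt x y, ltr u y))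
           (\<lambda>(x, u) (y, v). (gt x y, gtl x v))
           (\<lambda>(x, u) (y, v). (gt x y, gtr u y))
           (\<lambda>(x, u). (\<alpha> x, \<beta> u))"
proof -
  from assms have
    vs: "\<forall>a x y. s a (x + y) = s a x + s a y" "\<forall>a b x. s (a + b) x = s a x + s b x"
        "\<forall>a b x. s a (s b x) = s (a * b) x" "\<forall>x. s 1 x = x" and
    vv: "\<forall>a x y. sv a (x + y) = sv a x + sv a y" "\<forall>a b x. sv (a + b) x = sv a x + sv b x"
        "\<forall>a b x. sv a (sv b x) = sv (a * b) x" "\<forall>x. sv 1 x = x"
    unfolding hom_dendriform_def hom_dendriform_rep_def vs_iff by auto
  from assms have
    L: "\<forall>x y z. lt x (y + z) = lt x y + lt x z" "\<forall>x c y. lt x (s c y) = s c (lt x y)"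
       "\<forall>x y z. lt (x + y) z = lt x z + lt y z" "\<forall>x c y. lt (s c x) y = s c (lt x y)"
       "\<forall>x y z. gt x (y + z) = gt x y + gt x z" "\<forall>x c y. gt x (s c y) = s c (gt x y)"
       "\<forall>x y z. gt (x + y) z = gt x z + gt y z" "\<forall>x c y. gt (s c x) y = s c (gt x y)"
       "\<forall>x y. \<alpha> (x + y) = \<alpha> x + \<alpha> y" "\<forall>c x. \<alpha> (s c x) = s c (\<alpha> x)"
    and R: "\<forall>x y z. ltl x (y + z) = ltl x y + ltl x z" "\<forall>x c y. ltl x (sv c y) = sv c (ltl x y)"
       "\<forall>x y z. ltl (x + y) z = ltl x z + ltl y z" "\<forall>x c y. ltl (s c x) y = sv c (ltl x y)"
       "\<forall>x y z. gtl x (y + z) = gtl x y + gtl x z" "\<forall>x c y. gtl x (sv c y) = sv c (gtl x y)"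
       "\<forall>x y z. gtl (x + y) z = gtl x z + gtl y z" "\<forall>x c y. gtl (s c x) y = sv c (gtl x y)"
       "\<forall>x y z. ltr x (y + z) = ltr x y + ltr x z" "\<forall>x c y. ltr x (s c y) = sv c (ltr x y)"
       "\<forall>x y z. ltr (x + y) z = ltr x z + ltr y z" "\<forall>x c y. ltr (sv c x) y = sv c (ltr x y)"
       "\<forall>x y z. gtr x (y + z) = gtr x y + gtr x z" "\<forall>x c y. gtr x (s c y) = sv c (gtr x y)"
       "\<forall>x y z. gtr (x + y) z = gtr x z + gtr y z" "\<forall>x c y. gtr (sv c x) y = sv c (gtr x y)"
       "\<forall>x y. \<beta> (x + y) = \<beta> x + \<beta> y" "\<forall>c x. \<beta> (sv c x) = sv c (\<beta> x)"
    unfolding hom_dendriform_def hom_dendriform_rep_def bil_iff lin_iff by auto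
  from assms have
    A: "\<forall>x y z. lt (\<alpha> x) (lt y z + gt y z) = lt (lt x y) (\<alpha> z)"
       "\<forall>x y z. gt (\<alpha> x) (lt y z) = lt (gt x y) (\<alpha> z)"
       "\<forall>x y z. gt (\<alpha> x) (gt y z) = gt (lt x y + gt x y) (\<alpha> z)"
    and B: "\<forall>x y m. ltl (lt x y) (\<beta> m) = ltl (\<alpha> x) (ltl y m + gtl y m)"
     "\<forall>x y m. ltl (gt x y) (\<beta> m) = gtl (\<alpha> x) (ltl y m)"
     "\<forall>x y m. gtl (\<alpha> x) (gtl y m) = gtl (lt x y + gt x y) (\<beta> m)"
     "\<forall>x y m. ltr (\<beta> m) (lt x y + gt x y) = ltr (ltr m x) (\<alpha> y)"
     "\<forall>x y m. gtr (\<beta> m) (lt x y) = ltr (gtr m x) (\<alpha> y)"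
     "\<forall>x y m. gtr (ltr m x + gtr m x) (\<alpha> y) = gtr (\<beta> m) (gt x y)"
     "\<forall>x y m. ltr (ltl x m) (\<alpha> y) = ltl (\<alpha> x) (ltr m y + gtr m y)"
     "\<forall>x y m. ltr (gtl x m) (\<alpha> y) = gtl (\<alpha> x) (ltr m y)"
     "\<forall>x y m. gtr (ltl x m + gtl x m) (\<alpha> y) = gtl (\<alpha> x) (gtr m y)"
    unfolding hom_dendriform_def hom_dendriform_rep_def by auto
  have V: "vector_space (sum_scale s sv)"
    unfolding vs_iff sum_scale_def using vs vv by simp
  show ?thesis
    unfolding hom_quadri_dendriform_def bil_iff lin_iff
    using V vs vv L R A B by (simp add: sum_scale_def split_beta)
qed

end
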